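(* The class $\mathcal W$ is contained in the class $\mathcal A$; i.e., every bounded directoid with unary operation satisfying (ii), (iii), (iv) and the identity (i') also satisfies condition (i). (Hence $\mathcal W$ is a variety contained in $\mathcal A$.)
   Context: A bounded directoid with unary operation is an algebra $(P,\sqcup,{}',0,1)$ of type $(2,1,0,0)$ satisfying $x\sqcup x=x$, $x\sqcup y=y\sqcup x$, $x\sqcup((x\sqcup y)\sqcup z)=(x\sqcup y)\sqcup z$, $x\sqcup 0=x$, $x\sqcup 1=1$. Its induced order is $x\leq y$ iff $x\sqcup y=y$ (a partial order with least element $0$ and greatest element $1$). Put $x\sqcap y:=(x'\sqcup y')'$. Conditions: (i) for all $x,y,z$: if $(x\sqcup z)\sqcup(((x'\sqcap w)\sqcap((x\sqcup y)\sqcap w))\sqcup z)=z$ for all $w\in P$, then $(x\sqcup y)\sqcup z=z$; (ii) $(x\sqcap y)\sqcup x\approx x$; (iii) $(x\sqcup y)\sqcup(x'\sqcup y)\approx 1$; (iv) $x''\approx x$; (i') $x\sqcup y\leq(x\sqcup z)\sqcup((x'\sqcap(x\sqcup y))\sqcup z)$, i.e. the identity $(x\sqcup y)\sqcup t\approx t$ where $t=(x\sqcup z)\sqcup((x'\sqcap(x\sqcup y))\sqcup z)$. $\mathcal A$ is the class of bounded directoids with unary operation satisfying (i)–(iv) (equivalently, the directoids assigned to generalized orthomodular posets); $\mathcal W$ is the variety of bounded directoids with unary operation satisfying (ii), (iii), (iv) and (i'). *)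

theory Defs
  imports Main
begin

text \<open>An algebra (P, join, comp, z, u) (0 = z, 1 = u) of type (2,1,0,0) is represented on a type 'a
  (the carrier is the whole type).\<close>

definition bounded_directoid_un ::
  "('a \<Rightarrow> 'a \<Rightarrow> 'a) \<Rightarrow> ('a \<Rightarrow> 'a) \<Rightarrow> 'a \<Rightarrow> 'a \<Rightarrow> bool" where
  "bounded_directoid_un j c z u \<longleftrightarrow>
     (\<forall>x. j x x = x) \<and>
     (\<forall>x y. j x y = j y x) \<and>
     (\<forall>x y w. j x (j (j x y) w) = j (j x y) w) \<and>
     (\<forall>x. j x z = x) \<and>
     (\<forall>x. j x u = u)"

definition dmeet :: "('a \<Rightarrow> 'a \<Rightarrow> 'a) \<Rightarrow> ('a \<Rightarrow> 'a) \<Rightarrow> 'a \<Rightarrow> 'a \<Rightarrow> 'a" where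
  "dmeet j c x y = c (j (c x) (c y))"

definition cond_i :: "('a \<Rightarrow> 'a \<Rightarrow> 'a) \<Rightarrow> ('a \<Rightarrow> 'a) \<Rightarrow> bool" where
  "cond_i j c \<longleftrightarrow> (\<forall>x y t.
     (\<forall>w. j (j x t) (j (dmeet j c (dmeet j c (c x) w) (dmeet j c (j x y) w)) t) = t)
       \<longrightarrow> j (j x y) t = t)"

definition cond_ii :: "('a \<Rightarrow> 'a \<Rightarrow> 'a) \<Rightarrow> ('a \<Rightarrow> 'a) \<Rightarrow> bool" where
  "cond_ii j c \<longleftrightarrow> (\<forall>x y. j (dmeet j c x y) x = x)"

definition cond_iii :: "('a \<Rightarrow> 'a \<Rightarrow> 'a) \<Rightarrow> ('a \<Rightarrow> 'a) \<Rightarrow> 'a \<Rightarrow> bool" where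
  "cond_iii j c u \<longleftrightarrow> (\<forall>x y. j (j x y) (j (c x) y) = u)"

definition cond_iv :: "('a \<Rightarrow> 'a) \<Rightarrow> bool" where
  "cond_iv c \<longleftrightarrow> (\<forall>x. c (c x) = x)"

definition cond_i' :: "('a \<Rightarrow> 'a \<Rightarrow> 'a) \<Rightarrow> ('a \<Rightarrow> 'a) \<Rightarrow> bool" where
  "cond_i' j c \<longleftrightarrow> (\<forall>x y t.
     j (j x y) (j (j x t) (j (dmeet j c (c x) (j x y)) t)) = j (j x t) (j (dmeet j c (c x) (j x y)) t))"

end

theory Submission
  imports Defs
begin

theorem mainTheorem6:
  fixes j :: "'a \<Rightarrow> 'a \<Rightarrow> 'a" and c :: "'a \<Rightarrow> 'a" and z u :: 'a
  assumes "bounded_directoid_un j c z u"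
    and "cond_ii j c" and "cond_iii j c u" and "cond_iv c" and "cond_i' j c"
  shows "cond_i j c \<and> cond_ii j c \<and> cond_iii j c u \<and> cond_iv c"
proof -
  have idem: "\<And>x. j x x = x" and comm: "\<And>x y. j x y = j y x"
    using assms(1) unfolding bounded_directoid_un_def by auto
  have cc: "\<And>x. c (c x) = x" using assms(4) unfolding cond_iv_def by auto
  have ii: "\<And>x y. j (dmeet j c x y) x = x" using assms(2) unfolding cond_ii_def by auto
  have i': "\<And>x y t. j (j x y) (j (j x t) (j (dmeet j c (c x) (j x y)) t)) = j (j x t) (j (dmeet j c (c x) (j x y)) t)"
    using assms(5) unfolding cond_i'_def by auto
  have dcomm: "\<And>p q. dmeet j c p q = dmeet j c q p" unfolding dmeet_def using comm by metis
  have anti: "\<And>b a. j b a = a \<Longrightarrow> j (c a) (c b) = c b"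
  proof -
    fix a b assume h: "j b a = a"
    have "j (dmeet j c (c b) (c a)) (c b) = c b" by (rule ii)
    moreover have "dmeet j c (c b) (c a) = c a" unfolding dmeet_def using cc h by simp
    ultimately show "j (c a) (c b) = c b" by simp
  qed
  have key: "\<And>a b. j b a = a \<Longrightarrow> dmeet j c b a = b"
  proof -
    fix a b assume "j b a = a"
    then have "j (c a) (c b) = c b" by (rule anti)
    then show "dmeet j c b a = b" unfolding dmeet_def using cc comm by metis
  qed
  have midem: "\<And>a. dmeet j c a a = a" unfolding dmeet_def using cc idem by simp
  have "cond_i j c"
    unfolding cond_i_def
  proof (intro allI impI)
    fix x y t
    assume H: "\<forall>w. j (j x t) (j (dmeet j c (dmeet j c (c x) w) (dmeet j c (j x y) w)) t) = t"
    define a where "a = j x y"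
    define b where "b = dmeet j c (c x) a"
    have ba: "j b a = a" unfolding b_def using ii dcomm by metis
    have "j (j x t) (j (dmeet j c b a) t) = t" using H[rule_format, of a]
      unfolding b_def a_def using midem by simp
    then have "j (j x t) (j b t) = t" using key[OF ba] by simp
    moreover have "j a (j (j x t) (j b t)) = j (j x t) (j b t)"
      unfolding a_def b_def by (rule i')
    ultimately show "j (j x y) t = t" unfolding a_def by simp
  qed
  then show ?thesis using assms by simp
qed

end
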